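(* Let $a>0$ and let $L\ge0$ be an integer such that $p_m:=\dfrac12+\dfrac{a}{(m+1)(\log(m+1))^2}<1$ for all $m\geq L+1$, and set $q_m=1-p_m$. Then the quantity \[ \left[1+\frac{p_k}{q_k}+\frac{p_kp_{k-1}}{q_kq_{k-1}}+\cdots+\frac{p_k\cdots p_{L+1}}{q_k\cdots q_{L+1}}\right]\cdot\left[1+\frac{q_{L+1}}{p_{L+1}}+\frac{q_{L+1}q_{L+2}}{p_{L+1}p_{L+2}}+\cdots+\frac{q_{L+1}\cdots q_k}{p_{L+1}\cdots p_k}\right]^{-1} \] stays bounded as $k\to\infty$. Equivalently, for the nearest-neighbour Markov chain $Y_n$ on $\{L,L+1,\dots\}$ stopped at $L$ with up-probabilities $p_m$, the product of the probability that $Y$ started at $L+1$ hits $k+1$ before $L$ and the expected number of upcrossings from $k$ to $k+1$ of $Y$ started at $k$ is bounded uniformly in $k$.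
   Context: Upcrossings from $k$ to $k+1$ of a chain started at $k$: the number of times the chain, after being at $k$, subsequently hits $k+1$ before being stopped at $L$ (counted via alternating hitting times of $k+1$ and $k$). *)

theory Defs
  imports Complex_Main
begin

definition pp :: "real \<Rightarrow> nat \<Rightarrow> real" where
  "pp a m = 1/2 + a / ((real m + 1) * (ln (real m + 1))^2)"

definition qq :: "real \<Rightarrow> nat \<Rightarrow> real" where
  "qq a m = 1 - pp a m"

definition bracket1 :: "real \<Rightarrow> nat \<Rightarrow> nat \<Rightarrow> real" where
  "bracket1 a L k = (\<Sum>j=0..k-L. \<Prod>m\<in>{k+1-j..k}. pp a m / qq a m)"

definition bracket2 :: "real \<Rightarrow> nat \<Rightarrow> nat \<Rightarrow> real" where
  "bracket2 a L k = (\<Sum>j=0..k-L. \<Prod>m\<in>{L+1..L+j}. qq a m / pp a m)"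

end

theory Submission
  imports Defs
begin

lemma B1_eq:
  assumes "L \<le> k"
  shows "bracket1 a L k = (\<Sum>i=L..k. \<Prod>m\<in>{i+1..k}. pp a m / qq a m)"
  unfolding bracket1_def
  by (rule sum.reindex_bij_witness[where i="\<lambda>i. k-i" and j="\<lambda>j. k-j"])
     (use assms in \<open>auto simp: Suc_diff_le\<close>)

lemma B2_eq:
  assumes "L \<le> k"
  shows "bracket2 a L k = (\<Sum>i=L..k. \<Prod>m\<in>{L+1..i}. qq a m / pp a m)"
  unfolding bracket2_def
  by (rule sum.reindex_bij_witness[where i="\<lambda>i. i-L" and j="\<lambda>j. L+j"])
     (use assms in auto)

lemma pq_pos:
  assumes "a > 0" "\<forall>m\<ge>L+1. pp a m < 1" "m \<ge> L+1"
  shows "pp a m \<ge> 1/2" "qq a m > 0" "pp a m / qq a m \<ge> 1"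
proof -
  show p: "pp a m \<ge> 1/2" unfolding pp_def using assms(1) by (simp add: zero_le_mult_iff)
  show q: "qq a m > 0" unfolding qq_def using assms by auto
  show "pp a m / qq a m \<ge> 1" using p q unfolding qq_def by (simp add: field_simps)
qed

lemma prod_split:
  fixes f :: "nat \<Rightarrow> real"
  assumes "L \<le> i" "i \<le> k"
  shows "prod f {L+1..k} = prod f {L+1..i} * prod f {i+1..k}"
proof -
  have "{L+1..k} = {L+1..i} \<union> {i+1..k}" using assms by auto
  thus ?thesis by (simp add: prod.union_disjoint[symmetric] ivl_disj_int)
qed

lemma ratio_eq:
  assumes "a > 0" "\<forall>m\<ge>L+1. pp a m < 1" "L \<le> k"
  shows "bracket1 a L k / bracket2 a L k = (\<Prod>m\<in>{L+1..k}. pp a m / qq a m)"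
proof -
  define R where "R = (\<Prod>m\<in>{L+1..k}. pp a m / qq a m)"
  have tm: "(\<Prod>m\<in>{i+1..k}. pp a m / qq a m) = R * (\<Prod>m\<in>{L+1..i}. qq a m / pp a m)"
    if "i \<in> {L..k}" for i
  proof -
    have one: "(\<Prod>m\<in>{L+1..i}. pp a m / qq a m) * (\<Prod>m\<in>{L+1..i}. qq a m / pp a m) = 1"
    proof -
      have "(\<Prod>m\<in>{L+1..i}. pp a m / qq a m) * (\<Prod>m\<in>{L+1..i}. qq a m / pp a m)
          = (\<Prod>m\<in>{L+1..i}. pp a m / qq a m * (qq a m / pp a m))" by (simp only: prod.distrib)
      also have "\<dots> = (\<Prod>m\<in>{L+1..i}. 1)"
      proof (rule prod.cong)
        fix m assume "m \<in> {L+1..i}"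
        hence "pp a m \<ge> 1/2" "qq a m > 0" using pq_pos[OF assms(1,2)] by auto
        thus "pp a m / qq a m * (qq a m / pp a m) = 1" by simp
      qed simp
      finally show ?thesis by simp
    qed
    have "R = (\<Prod>m\<in>{L+1..i}. pp a m / qq a m) * (\<Prod>m\<in>{i+1..k}. pp a m / qq a m)"
      unfolding R_def using that by (intro prod_split) auto
    hence "R * (\<Prod>m\<in>{L+1..i}. qq a m / pp a m) = (\<Prod>m\<in>{i+1..k}. pp a m / qq a m) *
      ((\<Prod>m\<in>{L+1..i}. pp a m / qq a m) * (\<Prod>m\<in>{L+1..i}. qq a m / pp a m))"
      by (simp only: mult_ac)
    thus ?thesis using one by (simp only: mult_1_right)
  qed
  have b1: "bracket1 a L k = R * bracket2 a L k"
    unfolding B1_eq[OF assms(3)] B2_eq[OF assms(3)] sum_distrib_left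
    by (rule sum.cong) (use tm in auto)
  have pos: "bracket2 a L k > 0"
  proof -
    have "bracket2 a L k = (\<Sum>j=0..k-L. \<Prod>m\<in>{L+1..L+j}. qq a m / pp a m)" by (simp add: bracket2_def)
    also have "\<dots> > 0"
    proof (rule sum_pos)
      fix j assume "j \<in> {0..k-L}"
      show "(\<Prod>m\<in>{L+1..L+j}. qq a m / pp a m) > 0"
      proof (rule prod_pos)
        fix m assume "m \<in> {L+1..L+j}"
        hence "pp a m \<ge> 1/2" "qq a m > 0" using pq_pos[OF assms(1,2)] by auto
        thus "qq a m / pp a m > 0" by simp
      qed
    qed auto
    finally show ?thesis .
  qed
  show ?thesis using b1 pos unfolding R_def by simp
qed


lemma tele_term:
  assumes "m \<ge> (2::nat)"
  shows "1 / ((real m + 1) * (ln (real m + 1))^2) \<le> 1 / ln (real m) - 1 / ln (real m + 1)"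
proof -
  define x where "x = real m"
  have x2: "x \<ge> 2" using assms unfolding x_def by simp
  have l1: "ln x > 0" using x2 by simp
  have l12: "ln x \<le> ln (x+1)" using x2 by simp
  have d: "ln (x+1) - ln x \<ge> 1/(x+1)"
  proof -
    have "ln (x/(x+1)) \<le> x/(x+1) - 1" using x2 by (intro ln_le_minus_one) simp
    also have "\<dots> = - (1/(x+1))" using x2 by (simp add: field_simps)
    finally show ?thesis using x2 by (simp add: ln_div)
  qed
  have "1 / ((x + 1) * (ln (x + 1))^2) = (1/(x+1)) / (ln (x+1) * ln (x+1))"
    by (simp add: power2_eq_square)
  also have "\<dots> \<le> (ln (x+1) - ln x) / (ln (x+1) * ln (x+1))"
    using d l1 l12 by (intro divide_right_mono) auto
  also have "\<dots> \<le> (ln (x+1) - ln x) / (ln x * ln (x+1))"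
    using d l1 l12 x2 by (intro divide_left_mono mult_right_mono mult_pos_pos) (auto simp: add_pos_pos)
  also have "\<dots> = 1 / ln x - 1 / ln (x+1)"
    using l1 l12 by (simp add: field_simps)
  finally show ?thesis unfolding x_def .
qed

lemma tele_sum:
  assumes "M \<ge> (2::nat)"
  shows "(\<Sum>m=M..k. 1 / ((real m + 1) * (ln (real m + 1))^2)) \<le> 1 / ln (real M)"
proof (cases "M \<le> k")
  case False thus ?thesis using assms by simp
next
  case True
  define f where "f = (\<lambda>i::nat. - 1 / ln (real i))"
  have "(\<Sum>m=M..k. 1 / ((real m + 1) * (ln (real m + 1))^2)) \<le> (\<Sum>m=M..k. f (Suc m) - f m)"
  proof (rule sum_mono)
    fix m assume "m \<in> {M..k}"
    hence "m \<ge> 2" using assms by simp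
    from tele_term[OF this] show "1 / ((real m + 1) * (ln (real m + 1))^2) \<le> f (Suc m) - f m"
      by (simp add: f_def add.commute)
  qed
  also have "\<dots> = f (Suc k) - f M" using True by (intro sum_Suc_diff) simp
  also have "\<dots> \<le> 1 / ln (real M)" unfolding f_def using True assms by simp
  finally show ?thesis .
qed

theorem mainTheorem7:
  fixes a :: real and L :: nat
  assumes "a > 0"
    and "\<forall>m\<ge>L+1. pp a m < 1"
  shows "\<exists>C. \<forall>\<^sub>F k in sequentially. \<bar>bracket1 a L k / bracket2 a L k\<bar> \<le> C"
proof -
  define e where "e = (\<lambda>m::nat. a / ((real m + 1) * (ln (real m + 1))^2))"
  define r where "r = (\<lambda>m. pp a m / qq a m)"
  define M where "M = max (L+1) (max 3 (nat \<lceil>4*a\<rceil>))"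
  have M2: "M \<ge> 2" "M \<ge> L+1" unfolding M_def by auto
  have rbound: "0 \<le> r m \<and> r m \<le> exp (8 * (a * (1 / ((real m + 1) * (ln (real m + 1))^2))))"
    if "m \<in> {M..k}" for m k
  proof -
    have m3: "real m + 1 \<ge> 4" using that unfolding M_def by auto
    have ma: "real m + 1 \<ge> 4*a" using that unfolding M_def by auto
    have ln1: "ln (real m + 1) \<ge> 1"
    proof -
      have "exp 1 \<le> (3::real)" using exp_le by simp
      thus ?thesis using m3 by (subst ln_ge_iff) auto
    qed
    have e0: "e m \<ge> 0" unfolding e_def using assms(1) by simp
    have "e m \<le> a / ((real m + 1) * 1)"
      unfolding e_def using assms(1) m3 ln1
      by (intro divide_left_mono mult_left_mono) (auto simp: one_le_power)
    also have "\<dots> \<le> 1/4" using ma m3 assms(1) by (simp add: field_simps)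
    finally have e4: "e m \<le> 1/4" .
    have pq: "pp a m = 1/2 + e m" "qq a m = 1/2 - e m" unfolding pp_def qq_def e_def by simp_all
    have "r m \<le> 1 + 8 * e m"
    proof -
      have "1/2 + e m \<le> (1 + 8 * e m) * (1/2 - e m)" using e0 e4
        by (simp add: algebra_simps) (metis mult_left_mono mult.right_neutral)
      thus ?thesis unfolding r_def pq using e4 by (simp add: divide_le_eq)
    qed
    also have "\<dots> \<le> exp (8 * e m)" by (rule exp_ge_add_one_self)
    finally have up: "r m \<le> exp (8 * e m)" .
    have "r m \<ge> 0" unfolding r_def pq using e0 e4 by (intro divide_nonneg_nonneg) auto
    thus ?thesis using up unfolding e_def by simp
  qed
  define C where "C = (\<Prod>m\<in>{L+1..M-1}. r m) * exp (8 * (a / ln (real M)))"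
  have "\<bar>bracket1 a L k / bracket2 a L k\<bar> \<le> C" if k: "k \<ge> M" for k
  proof -
    have r0: "r m \<ge> 0" if "m \<ge> L+1" for m
      using pq_pos[OF assms, of m] that unfolding r_def by simp
    have eq: "bracket1 a L k / bracket2 a L k = (\<Prod>m\<in>{L+1..M-1}. r m) * (\<Prod>m\<in>{M..k}. r m)"
      using ratio_eq[OF assms, of k] prod_split[of L "M-1" k r] k M2 unfolding r_def by simp
    have "(\<Prod>m\<in>{M..k}. r m) \<le> (\<Prod>m\<in>{M..k}. exp (8 * (a * (1 / ((real m + 1) * (ln (real m + 1))^2)))))"
      by (intro prod_mono rbound)
    also have "\<dots> = exp (\<Sum>m\<in>{M..k}. 8 * (a * (1 / ((real m + 1) * (ln (real m + 1))^2))))"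
      by (simp add: exp_sum)
    also have "\<dots> = exp (8 * (a * (\<Sum>m\<in>{M..k}. 1 / ((real m + 1) * (ln (real m + 1))^2))))"
      by (simp only: sum_distrib_left[symmetric])
    also have "\<dots> \<le> exp (8 * (a * (1 / ln (real M))))"
      using tele_sum[OF M2(1), of k] assms(1)
      by (intro exp_mono mult_left_mono) auto
    also have "\<dots> = exp (8 * (a / ln (real M)))" by simp
    finally have b: "(\<Prod>m\<in>{M..k}. r m) \<le> exp (8 * (a / ln (real M)))" .
    have p0: "(\<Prod>m\<in>{L+1..M-1}. r m) \<ge> 0" by (intro prod_nonneg) (auto intro: r0)
    have p0': "(\<Prod>m\<in>{M..k}. r m) \<ge> 0" using M2 by (intro prod_nonneg) (auto intro: r0)
    show ?thesis unfolding eq C_def using p0 p0' b by (simp add: mult_left_mono)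
  qed
  thus ?thesis unfolding eventually_sequentially by blast
qed

end
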